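(* Consider $f(x)=x^2+x$ as a map $\mathbb{Z}_2\to\mathbb{Z}_2$. Then $0$ is a fixed point, $f(1+2\mathbb{Z}_2)\subset 2\mathbb{Z}_2$, and $$2\mathbb{Z}_2=\{0\}\sqcup\Big(\bigsqcup_{n\ge2}\big(2^{n-1}+2^n\mathbb{Z}_2\big)\Big),$$ where for each $n\ge2$ the set $2^{n-1}+2^n\mathbb{Z}_2$ is the disjoint union of the $2^{n-2}$ minimal components $$2^{n-1}+t2^n+2^{2n-2}\mathbb{Z}_2,\qquad t=0,\dots,2^{n-2}-1.$$
   Context: A minimal component of $f$ is a clopen set $E\subset\mathbb{Z}_2$ with $f(E)\subset E$ such that $f:E\to E$ is minimal (every orbit in $E$ is dense in $E$). *)

theory Defs
  imports Main
begin

text \<open>The 2-adic integers Z_2, as the inverse limit of Z/2^n Z: compatible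
  sequences of residues x n in {0..<2^n} with x (n+1) mod 2^n = x n.\<close>

typedef z2 = "{x :: nat \<Rightarrow> int. \<forall>n. 0 \<le> x n \<and> x n < 2^n \<and> x (Suc n) mod 2^n = x n}"
  by (rule exI[of _ "\<lambda>_. 0"]) simp

definition res :: "z2 \<Rightarrow> nat \<Rightarrow> int" where
  "res x n = Rep_z2 x n"

definition z2_of_int :: "int \<Rightarrow> z2" where
  "z2_of_int a = Abs_z2 (\<lambda>n. a mod 2^n)"

definition z2_add :: "z2 \<Rightarrow> z2 \<Rightarrow> z2" where
  "z2_add x y = Abs_z2 (\<lambda>n. (res x n + res y n) mod 2^n)"

definition z2_mul :: "z2 \<Rightarrow> z2 \<Rightarrow> z2" where
  "z2_mul x y = Abs_z2 (\<lambda>n. (res x n * res y n) mod 2^n)"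

definition fsq :: "z2 \<Rightarrow> z2" where
  "fsq x = z2_add (z2_mul x x) x"

definition coset :: "int \<Rightarrow> nat \<Rightarrow> z2 set" where
  "coset a m = {z2_add (z2_of_int a) (z2_mul (z2_of_int (2^m)) y) | y. True}"

definition z2_open :: "z2 set \<Rightarrow> bool" where
  "z2_open U \<longleftrightarrow> (\<forall>x\<in>U. \<exists>n. {y. res y n = res x n} \<subseteq> U)"

definition z2_clopen :: "z2 set \<Rightarrow> bool" where
  "z2_clopen E \<longleftrightarrow> z2_open E \<and> z2_open (- E)"

definition z2_dense_in :: "z2 set \<Rightarrow> z2 set \<Rightarrow> bool" where
  "z2_dense_in S E \<longleftrightarrow> S \<subseteq> E \<and> (\<forall>y\<in>E. \<forall>n. \<exists>s\<in>S. res s n = res y n)"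

definition orbit :: "(z2 \<Rightarrow> z2) \<Rightarrow> z2 \<Rightarrow> z2 set" where
  "orbit f x = {(f ^^ k) x | k. True}"

definition minimal_component :: "(z2 \<Rightarrow> z2) \<Rightarrow> z2 set \<Rightarrow> bool" where
  "minimal_component f E \<longleftrightarrow> z2_clopen E \<and> f ` E \<subseteq> E \<and>
     (\<forall>x\<in>E. z2_dense_in (orbit f x) E)"

end

theory Submission imports Defs begin

lemma res_props: "0 \<le> res x n \<and> res x n < 2^n \<and> res x (Suc n) mod 2^n = res x n"
  using Rep_z2[of x] by (auto simp: res_def)

lemma res_mod[simp]: "res x n mod 2^n = res x n"
  using res_props[of x n] by simp

lemma res_le: "n \<le> m \<Longrightarrow> res x m mod 2^n = res x n"
proof (induction m rule: dec_induct)
  case base then show ?case by simp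
next
  case (step m)
  have "res x (Suc m) mod 2^n = res x (Suc m) mod 2^m mod 2^n"
    using step(1) by (simp add: mod_mod_cancel le_imp_power_dvd)
  also have "\<dots> = res x n" using res_props[of x m] step by simp
  finally show ?case .
qed

lemma z2_eq: "(\<And>n. res x n = res y n) \<Longrightarrow> x = y"
  by (metis Rep_z2_inject ext res_def)

lemma res_Abs:
  assumes "\<And>n. p (Suc n) mod 2^n = p n mod (2::int)^n"
  shows "res (Abs_z2 (\<lambda>n. p n mod 2^n)) n = p n mod 2^n"
proof -
  have "(\<lambda>n. p n mod 2^n) \<in> {x :: nat \<Rightarrow> int. \<forall>n. 0 \<le> x n \<and> x n < 2^n \<and> x (Suc n) mod 2^n = x n}"
  proof (intro CollectI allI conjI)
    fix n
    show "0 \<le> p n mod 2^n" by simp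
    show "p n mod 2^n < 2^n" by simp
    have "p (Suc n) mod 2 ^ Suc n mod 2 ^ n = p (Suc n) mod 2^n"
      by (simp add: mod_mod_cancel)
    then show "p (Suc n) mod 2 ^ Suc n mod 2 ^ n = p n mod 2 ^ n" using assms by simp
  qed
  then show ?thesis by (simp add: res_def Abs_z2_inverse)
qed

lemma res_of_int[simp]: "res (z2_of_int a) n = a mod 2^n"
  unfolding z2_of_int_def by (rule res_Abs) simp

lemma res_add[simp]: "res (z2_add x y) n = (res x n + res y n) mod 2^n"
  unfolding z2_add_def
proof (rule res_Abs)
  fix n
  show "(res x (Suc n) + res y (Suc n)) mod 2 ^ n = (res x n + res y n) mod 2 ^ n"
    by (metis mod_add_eq res_props)
qed

lemma res_mul[simp]: "res (z2_mul x y) n = (res x n * res y n) mod 2^n"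
  unfolding z2_mul_def
proof (rule res_Abs)
  fix n
  show "(res x (Suc n) * res y (Suc n)) mod 2 ^ n = (res x n * res y n) mod 2 ^ n"
    by (metis mod_mult_eq res_props)
qed

definition F :: "int \<Rightarrow> int" where "F x = x*x + x"

lemma F_mod: "F (u mod m) mod m = F u mod m"
  unfolding F_def by (metis mod_add_eq mod_mod_trivial mod_mult_eq)

lemma res_fsq: "res (fsq x) n = F (res x n) mod 2^n"
  by (simp add: fsq_def F_def mod_add_left_eq)

lemma res_iter: "res ((fsq^^k) x) n = (F^^k) (res x n) mod 2^n"
proof (induction k)
  case 0 then show ?case by simp
next
  case (Suc k)
  then show ?case by (simp add: res_fsq F_mod)
qed

lemma div_cong:
  fixes u w :: int
  assumes "2^m dvd u" "2^m dvd w" "2^(n+m) dvd u - w"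
  shows "(u div 2^m) mod 2^n = (w div 2^m) mod 2^n"
proof -
  obtain e1 where e1: "u = 2^m * e1" using assms(1) by blast
  obtain e0 where e0: "w = 2^m * e0" using assms(2) by blast
  have "(2::int)^m * 2^n dvd 2^m * (e1 - e0)"
    using assms(3) by (simp add: e1 e0 power_add right_diff_distrib mult.commute[of "(2::int)^n"])
  then have "(2::int)^n dvd e1 - e0" by (subst (asm) dvd_mult_cancel_left) simp_all
  then show ?thesis by (simp add: e1 e0 mod_eq_dvd_iff)
qed

lemma coset_eq: "coset a m = {z. res z m = a mod 2^m}"
proof (intro set_eqI iffI)
  fix z assume "z \<in> coset a m"
  then obtain y where z: "z = z2_add (z2_of_int a) (z2_mul (z2_of_int (2^m)) y)"
    unfolding coset_def by blast
  show "z \<in> {z. res z m = a mod 2^m}" by (simp add: z)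
next
  fix z assume "z \<in> {z. res z m = a mod 2^m}"
  then have zm: "res z m = a mod 2^m" by simp
  define q where "q n = (res z (n+m) - a) div 2^m" for n
  have dv: "(2::int)^m dvd res z (n+m) - a" for n
  proof -
    have "res z (n+m) mod 2^m = a mod 2^m" using res_le[of m "n+m" z] zm by simp
    then show ?thesis by (simp add: mod_eq_dvd_iff)
  qed
  have compat: "q (Suc n) mod 2^n = q n mod 2^n" for n
    unfolding q_def
  proof (rule div_cong[OF dv dv])
    have "res z (Suc (n+m)) mod 2^(n+m) = res z (n+m)" using res_props[of z "n+m"] by simp
    then have "(2::int)^(n+m) dvd res z (Suc (n+m)) - res z (n+m)"
      by (metis mod_eq_dvd_iff res_mod)
    then show "2 ^ (n + m) dvd res z (Suc n + m) - a - (res z (n + m) - a)" by simp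
  qed
  define y where "y = Abs_z2 (\<lambda>n. q n mod 2^n)"
  have ry: "res y n = q n mod 2^n" for n unfolding y_def by (rule res_Abs[OF compat])
  have "z = z2_add (z2_of_int a) (z2_mul (z2_of_int (2^m)) y)"
  proof (rule z2_eq)
    fix n
    have e: "2^m * q n = res z (n+m) - a" unfolding q_def using dv[of n] by simp
    have "res (z2_add (z2_of_int a) (z2_mul (z2_of_int (2^m)) y)) n
        = (a mod 2^n + (2^m mod 2^n * (q n mod 2^n)) mod 2^n) mod 2^n" by (simp add: ry)
    also have "\<dots> = (a + 2^m * q n) mod 2^n" by (metis mod_add_eq mod_mult_eq mod_mod_trivial)
    also have "\<dots> = res z (n+m) mod 2^n" by (simp add: e)
    also have "\<dots> = res z n" by (simp add: res_le)
    finally show "res z n = res (z2_add (z2_of_int a) (z2_mul (z2_of_int (2^m)) y)) n" by simp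
  qed
  then show "z \<in> coset a m" unfolding coset_def by blast
qed


lemma F_even: "even (F x)"
  unfolding F_def by simp

lemma iter_even: "even x \<Longrightarrow> even ((F^^j) x)"
  by (cases j) (simp_all add: F_even)

lemma lemB:
  assumes ev: "even x" and d4: "4 dvd d"
  shows "\<exists>c. (F^^j) (x+d) - (F^^j) x = d*c \<and> c mod 4 = 1"
proof (induction j)
  case 0 then show ?case by (intro exI[of _ 1]) simp
next
  case (Suc j)
  then obtain c where c: "(F^^j) (x+d) - (F^^j) x = d*c" "c mod 4 = 1" by blast
  define X where "X = (F^^j) x"
  have eX: "even X" unfolding X_def using iter_even[OF ev] .
  have Y: "(F^^j) (x+d) = X + d*c" using c(1) unfolding X_def by simp
  have a1: "(F^^Suc j) (x+d) = F (X + d*c)" using Y by simp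
  have a2: "(F^^Suc j) x = F X" unfolding X_def by simp
  have diff: "(F^^Suc j) (x+d) - (F^^Suc j) x = d*(c*(2*X + d*c + 1))"
    unfolding a1 a2 by (simp add: F_def algebra_simps)
  obtain s where s: "X = 2*s" using eX by blast
  obtain r where r: "d = 4*r" using d4 by blast
  have cq: "c = 4*(c div 4) + 1" using c(2) by (metis div_mult_mod_eq mult.commute)
  define q where "q = c div 4"
  define W where "W = q*(4*s + 4*r*c + 1) + s + r*c"
  have "c*(2*X + d*c + 1) = 1 + W * 4"
    using cq unfolding q_def[symmetric] s r W_def by (simp add: algebra_simps)
  then have "(c*(2*X + d*c + 1)) mod 4 = 1" by (simp only: mod_mult_self2) simp
  then show ?case using diff by blast
qed

lemma lemB':
  assumes ev: "even x" and dK: "2^K dvd d" and K: "K \<ge> 2"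
  shows "(2::int)^(K+2) dvd ((F^^j) (x+d) - (F^^j) x - d)"
proof -
  have "(4::int) dvd 2^K" using le_imp_power_dvd[of 2 K "2::int"] K by simp
  then have "4 dvd d" using dK by (metis dvd_trans)
  then obtain c where c: "(F^^j) (x+d) - (F^^j) x = d*c" "c mod 4 = 1" using lemB[OF ev] by blast
  have "4 dvd c - 1" using c(2) by (simp add: mod_eq_dvd_iff[symmetric])
  then have "2^K * 4 dvd d * (c - 1)" using dK by (simp add: mult_dvd_mono)
  then show ?thesis using c(1) by (simp add: power_add algebra_simps)
qed

lemma iter_cl: "\<forall>x\<in>S. F x \<in> S \<Longrightarrow> x \<in> S \<Longrightarrow> (F^^j) x \<in> S"
  by (induction j) auto

lemma lemP:
  assumes cl: "\<forall>x\<in>S. F x \<in> S" and ev: "\<forall>x\<in>S. even x"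
    and base: "\<forall>x\<in>S. \<exists>v. F x - x = 2^M*v \<and> odd v" and M: "M \<ge> 2"
  shows "\<forall>x\<in>S. \<exists>v. (F^^(2^k)) x - x = 2^(M+k)*v \<and> odd v"
proof (induction k)
  case 0 then show ?case using base by simp
next
  case (Suc k)
  show ?case
  proof
    fix x assume xS: "x \<in> S"
    define h where "h = F^^(2^k)"
    obtain v where v: "h x - x = 2^(M+k)*v" "odd v" using Suc xS unfolding h_def by blast
    have hxS: "h x \<in> S" unfolding h_def using iter_cl[OF cl xS] .
    obtain v' where v': "h (h x) - h x = 2^(M+k)*v'" "odd v'" using Suc hxS unfolding h_def by blast
    have dd: "(2::int)^(M+k) dvd h x - x" using v(1) by simp
    have "(2::int)^(M+k+2) dvd ((F^^(2^k)) (x + (h x - x)) - (F^^(2^k)) x - (h x - x))"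
      using lemB'[of x "M+k" "h x - x" "2^k", OF _ dd] ev xS M by simp
    then have "(2::int)^(M+k+2) dvd (h (x + (h x - x)) - h x - (h x - x))"
      unfolding h_def .
    then have "(2::int)^(M+k) * 4 dvd 2^(M+k) * (v' - v)"
      using v v' by (simp add: power_add algebra_simps)
    then have "4 dvd v' - v" by (subst (asm) dvd_mult_cancel_left) simp_all
    then obtain w where w: "v' = v + 4*w" by (metis add_diff_cancel_left' dvd_def diff_add_cancel)
    have "(F^^(2^Suc k)) x = h (h x)" unfolding h_def by (simp add: funpow_add mult_2)
    moreover have "h (h x) - x = 2^(M + Suc k) * (v + 2*w)"
      using v v' w by (simp add: algebra_simps)
    moreover have "odd (v + 2*w)" using v(2) by simp
    ultimately show "\<exists>v. (F^^(2^Suc k)) x - x = 2^(M + Suc k)*v \<and> odd v" by metis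
  qed
qed

lemma lemT:
  assumes cl: "\<forall>x\<in>S. F x \<in> S" and ev: "\<forall>x\<in>S. even x"
    and base: "\<forall>x\<in>S. \<exists>v. F x - x = 2^M*v \<and> odd v" and M: "M \<ge> 2"
    and same: "\<forall>x\<in>S. \<forall>y\<in>S. x mod 2^M = y mod 2^M"
  shows "\<forall>x\<in>S. \<forall>y\<in>S. \<exists>j. (F^^j) x mod 2^(M+k) = y mod 2^(M+k)"
proof (induction k)
  case 0 then show ?case using same by (metis add_0_right funpow_0)
next
  case (Suc k)
  show ?case
  proof (intro ballI)
    fix x y assume xS: "x \<in> S" and yS: "y \<in> S"
    obtain j where j: "(F^^j) x mod 2^(M+k) = y mod 2^(M+k)" using Suc xS yS by blast
    define z where "z = (F^^j) x"
    have zS: "z \<in> S" unfolding z_def using iter_cl[OF cl xS] .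
    have "(2::int)^(M+k) dvd z - y" using j unfolding z_def by (simp add: mod_eq_dvd_iff)
    then obtain e where e: "z - y = 2^(M+k) * e" by blast
    show "\<exists>j. (F^^j) x mod 2^(M + Suc k) = y mod 2^(M + Suc k)"
    proof (cases "even e")
      case True
      then obtain e' where "e = 2*e'" by blast
      then have "z - y = 2^(M + Suc k) * e'" using e by simp
      then have "z mod 2^(M + Suc k) = y mod 2^(M + Suc k)" by (simp add: mod_eq_dvd_iff)
      then show ?thesis unfolding z_def by blast
    next
      case False
      obtain v where v: "(F^^(2^k)) z - z = 2^(M+k)*v" "odd v"
        using lemP[OF cl ev base M] zS by blast
      have "(F^^(2^k + j)) x = (F^^(2^k)) z" unfolding z_def by (simp add: funpow_add)
      moreover have "(F^^(2^k)) z - y = 2^(M+k)*(e+v)" using v e by (simp add: algebra_simps)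
      moreover obtain g where "e + v = 2*g" using False v(2) by (metis odd_add dvdE)
      ultimately have "(F^^(2^k + j)) x - y = 2^(M + Suc k) * g" by simp
      then have "(F^^(2^k + j)) x mod 2^(M + Suc k) = y mod 2^(M + Suc k)" by (simp add: mod_eq_dvd_iff)
      then show ?thesis by blast
    qed
  qed
qed


lemma minc:
  assumes n: "2 \<le> n" and t: "t < 2^(n-2)"
  shows "minimal_component fsq (coset (2^(n-1) + int t * 2^n) (2*n-2))"
proof -
  obtain p where np: "n = p + 2" using n by (metis add.commute le_Suc_ex)
  define A :: int where "A = 2^(p+1) + int t * 2^(p+2)"
  define M where "M = 2*p+2"
  have AE: "(2::int)^(n-1) + int t * 2^n = A" "2*n-2 = M" unfolding A_def M_def np by simp_all
  have tp: "int t + 1 \<le> 2^p" 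
  proof -
    have "t < 2^p" using t np by simp
    then have "int t < int (2^p)" by (simp only: of_nat_less_iff)
    then have "int t < 2^p" by (simp only: of_nat_power of_nat_numeral)
    then show ?thesis by linarith
  qed
  have A0: "0 \<le> A" unfolding A_def by simp
  have "A < (int t + 1) * 2^(p+2)" unfolding A_def by (simp add: algebra_simps)
  also have "\<dots> \<le> 2^p * 2^(p+2)" using tp by (intro mult_right_mono) simp_all
  also have "\<dots> = 2^M" unfolding M_def by (simp add: power_add[symmetric])
  finally have AM: "A < 2^M" .
  have Amod: "A mod 2^M = A" using A0 AM by simp
  have M2: "M \<ge> 2" unfolding M_def by simp
  define S where "S = {x::int. x mod 2^M = A}"
  have AS: "A \<in> S" unfolding S_def using Amod by simp
  define P :: int where "P = 2^(p+1)"
  have PM: "(2::int)^M = P*P" unfolding P_def M_def by (simp add: power_add[symmetric])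
  have P2: "A = P + int t * (2*P)" unfolding P_def A_def by simp
  have sq: "\<exists>u. x = P * u \<and> odd u" if "x \<in> S" for x
  proof -
    define q where "q = x div 2^M"
    have xm: "x mod 2^M = A" using that unfolding S_def by simp
    have "x div 2^M * 2^M + x mod 2^M = x" by (rule div_mult_mod_eq)
    then have x: "x = A + 2^M * q" unfolding q_def xm by (simp add: ac_simps)
    have "x = P * (1 + 2*int t + P*q)"
      unfolding x P2 PM by (simp add: algebra_simps)
    moreover have "odd (1 + 2*int t + P*q)" unfolding P_def by simp
    ultimately show ?thesis by blast
  qed
  have base: "\<forall>x\<in>S. \<exists>v. F x - x = 2^M*v \<and> odd v"
  proof
    fix x assume "x \<in> S"
    then obtain u where u: "x = P * u" "odd u" using sq by blast
    have "F x - x = x * x" by (simp add: F_def)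
    also have "\<dots> = (P*P) * (u*u)" unfolding u(1) by (simp add: mult_ac)
    finally have "F x - x = 2^M * (u*u)" unfolding PM .
    then show "\<exists>v. F x - x = 2^M*v \<and> odd v" using u(2) by (intro exI[of _ "u*u"] conjI) simp_all
  qed
  have ev: "\<forall>x\<in>S. even x"
  proof
    fix x assume "x \<in> S"
    then obtain u where u: "x = P * u" using sq by blast
    then show "even x" unfolding P_def by simp
  qed
  have cl: "\<forall>x\<in>S. F x \<in> S"
  proof
    fix x assume xS: "x \<in> S"
    then obtain v where v: "F x - x = 2^M*v" using base by blast
    have "F x mod 2^M = (x + v*2^M) mod 2^M" using v by (simp add: algebra_simps)
    also have "\<dots> = x mod 2^M" by (simp only: mod_mult_self1)
    finally show "F x \<in> S" using xS unfolding S_def by simp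
  qed
  have same: "\<forall>x\<in>S. \<forall>y\<in>S. x mod 2^M = y mod 2^M" unfolding S_def by simp
  have E: "coset A M = {z. res z M = A}" by (simp add: coset_eq Amod)
  have resS: "res z (M + N) \<in> S" if "z \<in> coset A M" for z N
    using that res_le[of M "M+N" z] unfolding E S_def by simp
  show ?thesis unfolding AE E minimal_component_def
  proof (intro conjI ballI)
    show "z2_clopen {z. res z M = A}"
      unfolding z2_clopen_def z2_open_def
    proof (intro conjI ballI)
      fix x assume "x \<in> {z. res z M = A}"
      then show "\<exists>n. {y. res y n = res x n} \<subseteq> {z. res z M = A}" by (intro exI[of _ M]) auto
    next
      fix x assume "x \<in> - {z. res z M = A}"
      then show "\<exists>n. {y. res y n = res x n} \<subseteq> - {z. res z M = A}" by (intro exI[of _ M]) auto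
    qed
    show "fsq ` {z. res z M = A} \<subseteq> {z. res z M = A}"
    proof
      fix w assume "w \<in> fsq ` {z. res z M = A}"
      then obtain z where z: "w = fsq z" "res z M = A" by blast
      have "F A \<in> S" using cl AS by blast
      then show "w \<in> {z. res z M = A}" using z by (simp add: res_fsq S_def)
    qed
    fix x assume xE: "x \<in> {z. res z M = A}"
    show "z2_dense_in (orbit fsq x) {z. res z M = A}"
      unfolding z2_dense_in_def orbit_def
    proof (intro conjI ballI allI subsetI)
      fix w assume "w \<in> {(fsq ^^ k) x |k. True}"
      then obtain k where w: "w = (fsq^^k) x" by blast
      have "(F^^k) A \<in> S" using iter_cl[OF cl AS] .
      then show "w \<in> {z. res z M = A}" using xE by (simp add: w res_iter S_def)
    next
      fix y N assume yE: "y \<in> {z. res z M = A}"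
      have xS: "res x (M+N) \<in> S" using resS[of x N] xE E by simp
      have yS: "res y (M+N) \<in> S" using resS[of y N] yE E by simp
      obtain j where j: "(F^^j) (res x (M+N)) mod 2^(M+N) = res y (M+N) mod 2^(M+N)"
        using lemT[OF cl ev base M2 same] xS yS by blast
      have "res ((fsq^^j) x) (M+N) = res y (M+N)" using j by (simp add: res_iter)
      then have "res ((fsq^^j) x) (M+N) mod 2^N = res y (M+N) mod 2^N" by simp
      then have "res ((fsq^^j) x) N = res y N" by (simp add: res_le)
      then show "\<exists>s\<in>{(fsq ^^ k) x |k. True}. res s N = res y N" by blast
    qed
  qed
qed


lemma pmod: "1 \<le> n \<Longrightarrow> (2::int)^(n-1) mod 2^n = 2^(n-1)"
proof -
  assume "1 \<le> n"
  then obtain k where k: "n = Suc k" by (cases n) auto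
  show ?thesis unfolding k by (simp add: mod_pos_pos_trivial)
qed

lemma coset_pow: "1 \<le> n \<Longrightarrow> coset (2^(n-1)) n = {z. res z n = 2^(n-1)}"
  by (simp add: coset_eq pmod)

lemma Brange:
  assumes n: "2 \<le> n" and t: "t < 2^(n-2)"
  shows "0 \<le> (2::int)^(n-1) + int t * 2^n \<and> (2::int)^(n-1) + int t * 2^n < 2^(2*n-2)"
proof -
  obtain p where np: "n = p + 2" using n by (metis add.commute le_Suc_ex)
  have tp: "int t + 1 \<le> 2^p"
  proof -
    have "t < 2^p" using t np by simp
    then have "int t < int (2^p)" by (simp only: of_nat_less_iff)
    then have "int t < 2^p" by (simp only: of_nat_power of_nat_numeral)
    then show ?thesis by linarith
  qed
  have "(2::int)^(p+1) + int t * 2^(p+2) < (int t + 1) * 2^(p+2)" by (simp add: algebra_simps)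
  also have "\<dots> \<le> 2^p * 2^(p+2)" using tp by (intro mult_right_mono) simp_all
  also have "\<dots> = 2^(2*p+2)" by (simp add: power_add[symmetric])
  finally show ?thesis unfolding np by simp
qed

lemma part3: "coset 0 1 = {z2_of_int 0} \<union> (\<Union>n\<in>{2..}. coset (2^(n-1)) n)"
proof (intro set_eqI iffI)
  fix z assume "z \<in> coset 0 1"
  then have z1: "res z 1 = 0" by (simp add: coset_eq)
  show "z \<in> {z2_of_int 0} \<union> (\<Union>n\<in>{2..}. coset (2^(n-1)) n)"
  proof (cases "z = z2_of_int 0")
    case True then show ?thesis by simp
  next
    case False
    then have "\<exists>N. res z N \<noteq> 0" using z2_eq[of z "z2_of_int 0"] by auto
    define n where "n = (LEAST N. res z N \<noteq> 0)"
    have rn: "res z n \<noteq> 0" unfolding n_def by (rule LeastI_ex[OF \<open>\<exists>N. res z N \<noteq> 0\<close>])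
    have below: "res z m = 0" if "m < n" for m using not_less_Least[of m "\<lambda>N. res z N \<noteq> 0"] that unfolding n_def by simp
    have r0: "res z 0 = 0" using res_props[of z 0] by simp
    have "n \<noteq> 0"
    proof
      assume "n = 0" then show False using rn r0 by simp
    qed
    then obtain k where k: "n = Suc k" by (metis not0_implies_Suc)
    have "k \<noteq> 0"
    proof
      assume "k = 0" then show False using rn z1 k by simp
    qed
    have rk: "res z k = 0" using below k by simp
    have "res z (Suc k) mod 2^k = 0" using res_props[of z k] rk by simp
    then have "2^k dvd res z (Suc k)" by (simp add: dvd_eq_mod_eq_0)
    then obtain c where c: "res z (Suc k) = 2^k * c" by (elim dvdE)
    have "0 \<le> 2^k * c" "2^k * c < 2^k * (2::int)" using res_props[of z "Suc k"] c by (simp_all add: mult.commute)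
    then have "0 \<le> c" "c < 2" by (simp_all add: zero_le_mult_iff)
    moreover have "c \<noteq> 0" using rn c k by auto
    ultimately have "c = 1" by simp
    then have "res z n = 2^(n-1)" using c k by simp
    moreover have "n \<ge> 2" using k \<open>k \<noteq> 0\<close> by simp
    ultimately show ?thesis using coset_pow[of n] by auto
  qed
next
  fix z assume "z \<in> {z2_of_int 0} \<union> (\<Union>n\<in>{2..}. coset (2^(n-1)) n)"
  then consider "z = z2_of_int 0" | n where "n \<ge> 2" "res z n = 2^(n-1)"
    using coset_pow by fastforce
  then show "z \<in> coset 0 1"
  proof cases
    case 1 then show ?thesis by (simp add: coset_eq)
  next
    case 2
    obtain k where k: "n = Suc (Suc k)" using 2(1) by (metis add_2_eq_Suc le_Suc_ex)
    have "res z 1 = res z n mod 2" using res_le[of 1 n z] 2 by simp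
    then show ?thesis using 2 k by (simp add: coset_eq)
  qed
qed

lemma part5:
  assumes "1 \<le> n" "n < m" "res z m = 2^(m-1)" shows "res z n \<noteq> 2^(n-1)"
proof -
  have "(2::int)^n dvd 2^(m-1)" using assms by (intro le_imp_power_dvd) simp
  then have "res z n = 0" using res_le[of n m z] assms by simp
  then show ?thesis by simp
qed


lemma part6:
  assumes n: "2 \<le> n"
  shows "coset (2^(n-1)) n = (\<Union>t\<in>{0..<2^(n-2)}. coset (2^(n-1) + int t * 2^n) (2*n-2))"
proof (intro set_eqI iffI)
  fix z assume "z \<in> coset (2^(n-1)) n"
  then have zn: "res z n = 2^(n-1)" using coset_pow n by simp
  define r where "r = res z (2*n-2)"
  have "r mod 2^n = 2^(n-1)" unfolding r_def using res_le[of n "2*n-2" z] n zn by simp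
  define d where "d = r div 2^n"
  have rd: "r = d * 2^n + 2^(n-1)" unfolding d_def using div_mult_mod_eq[of r "2^n"] \<open>r mod 2^n = 2^(n-1)\<close> by simp
  have r0: "0 \<le> r" "r < 2^(2*n-2)" unfolding r_def using res_props[of z "2*n-2"] by simp_all
  have d0: "0 \<le> d" unfolding d_def using r0 by (simp add: pos_imp_zdiv_nonneg_iff)
  have eq: "(2::int)^(2*n-2) = 2^(n-2) * 2^n" using n by (simp add: power_add[symmetric])
  have "(0::int) \<le> 2^(n-1)" by simp
  then have "d * 2^n < 2^(n-2) * 2^n" using rd r0 eq by linarith
  then have "d < 2^(n-2)" by simp
  define t where "t = nat d"
  have td: "int t = d" unfolding t_def using d0 by simp
  have "int t < int (2^(n-2))" using td \<open>d < 2^(n-2)\<close> by simp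
  then have tl: "t < 2^(n-2)" by (simp only: of_nat_less_iff)
  have "res z (2*n-2) = (2^(n-1) + int t * 2^n) mod 2^(2*n-2)"
    using Brange[OF n tl] unfolding td r_def[symmetric] rd by simp
  then show "z \<in> (\<Union>t\<in>{0..<2^(n-2)}. coset (2^(n-1) + int t * 2^n) (2*n-2))"
    using tl by (auto simp: coset_eq)
next
  fix z assume "z \<in> (\<Union>t\<in>{0..<2^(n-2)}. coset (2^(n-1) + int t * 2^n) (2*n-2))"
  then obtain t where t: "t < 2^(n-2)" "res z (2*n-2) = (2^(n-1) + int t * 2^n) mod 2^(2*n-2)"
    by (auto simp: coset_eq)
  have "res z (2*n-2) = 2^(n-1) + int t * 2^n" using t Brange[OF n t(1)] by simp
  then have "res z n = (2^(n-1) + int t * 2^n) mod 2^n" using res_le[of n "2*n-2" z] n by simp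
  also have "\<dots> = 2^(n-1) mod 2^n" by simp
  also have "\<dots> = 2^(n-1)" using n by (simp add: pmod)
  finally show "z \<in> coset (2^(n-1)) n" using coset_pow n by simp
qed

lemma part7:
  assumes n: "2 \<le> n" and t: "t < 2^(n-2)" and t': "t' < 2^(n-2)" and ne: "t \<noteq> t'"
  shows "coset (2^(n-1) + int t * 2^n) (2*n-2) \<inter> coset (2^(n-1) + int t' * 2^n) (2*n-2) = {}"
proof -
  have "(2::int)^(n-1) + int t * 2^n \<noteq> 2^(n-1) + int t' * 2^n" using ne by simp
  then show ?thesis using Brange[OF n t] Brange[OF n t'] by (auto simp: coset_eq)
qed

theorem theoremE:
  shows "(fsq (z2_of_int 0) = z2_of_int 0) \<and>
        (fsq ` coset 1 1 \<subseteq> coset 0 1) \<and>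
        (coset 0 1 = {z2_of_int 0} \<union> (\<Union>n\<in>{2..}. coset (2^(n-1)) n)) \<and>
        (z2_of_int 0 \<notin> (\<Union>n\<in>{2..}. coset (2^(n-1)) n)) \<and>
        (\<forall>n m. 2 \<le> n \<longrightarrow> 2 \<le> m \<longrightarrow> n \<noteq> m \<longrightarrow>
           coset (2^(n-1)) n \<inter> coset (2^(m-1)) m = {}) \<and>
        (\<forall>n\<ge>2. coset (2^(n-1)) n =
           (\<Union>t\<in>{0..<2^(n-2)}. coset (2^(n-1) + int t * 2^n) (2*n-2))) \<and>
        (\<forall>n\<ge>2. \<forall>t\<in>{0..<2^(n-2)}. \<forall>t'\<in>{0..<2^(n-2)}. t \<noteq> t' \<longrightarrow>
           coset (2^(n-1) + int t * 2^n) (2*n-2) \<inter> coset (2^(n-1) + int t' * 2^n) (2*n-2) = {}) \<and>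
        (\<forall>n\<ge>2. \<forall>t\<in>{0..<2^(n-2)}.
           minimal_component fsq (coset (2^(n-1) + int t * 2^n) (2*n-2)))"
proof (intro conjI allI impI ballI)
  show "fsq (z2_of_int 0) = z2_of_int 0" by (rule z2_eq) (simp add: res_fsq F_def)
  show "fsq ` coset 1 1 \<subseteq> coset 0 1" by (auto simp: coset_eq res_fsq F_def)
  show "coset 0 1 = {z2_of_int 0} \<union> (\<Union>n\<in>{2..}. coset (2^(n-1)) n)" by (rule part3)
  show "z2_of_int 0 \<notin> (\<Union>n\<in>{2..}. coset (2^(n-1)) n)"
  proof
    assume "z2_of_int 0 \<in> (\<Union>n\<in>{2..}. coset (2^(n-1)) n)"
    then obtain n where "n \<ge> 2" "z2_of_int 0 \<in> coset (2^(n-1)) n" by blast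
    then have "(0::int) = 2^(n-1)" using coset_pow[of n] by simp
    then show False by simp
  qed
next
  fix n m :: nat assume a: "2 \<le> n" "2 \<le> m" "n \<noteq> m"
  show "coset (2^(n-1)) n \<inter> coset (2^(m-1)) m = {}"
  proof -
    have c1: "coset (2^(n-1)) n = {z. res z n = 2^(n-1)}" using a coset_pow[of n] by simp
    have c2: "coset (2^(m-1)) m = {z. res z m = 2^(m-1)}" using a coset_pow[of m] by simp
    show ?thesis unfolding c1 c2
    proof (cases "n < m")
      case True then show "{z. res z n = 2^(n-1)} \<inter> {z. res z m = 2^(m-1)} = {}"
        using part5[of n m] a by auto
    next
      case False then have "m < n" using a by simp
      then show "{z. res z n = 2^(n-1)} \<inter> {z. res z m = 2^(m-1)} = {}"
        using part5[of m n] a by auto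
    qed
  qed
next
  fix n :: nat assume "2 \<le> n"
  then show "coset (2^(n-1)) n = (\<Union>t\<in>{0..<2^(n-2)}. coset (2^(n-1) + int t * 2^n) (2*n-2))"
    by (rule part6)
next
  fix n t t' :: nat assume "2 \<le> n" "t \<in> {0..<2^(n-2)}" "t' \<in> {0..<2^(n-2)}" "t \<noteq> t'"
  then show "coset (2^(n-1) + int t * 2^n) (2*n-2) \<inter> coset (2^(n-1) + int t' * 2^n) (2*n-2) = {}"
    using part7 by simp
next
  fix n t :: nat assume "2 \<le> n" "t \<in> {0..<2^(n-2)}"
  then show "minimal_component fsq (coset (2^(n-1) + int t * 2^n) (2*n-2))"
    using minc by simp
qed

end
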